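(* Let $f:\mathbb{S}^3\to\mathbb{S}^3\subset\mathbb{H}$ be smooth and let $\Psi=[\tilde u,f]$ be the corresponding unit spinor on $\mathbb{S}^3$. For $a\in\mathrm{Im}\,\mathbb{H}$ let $\xi_a$ be defined by $\xi_a\cdot\Psi=\Psi a$ (explicitly, $\xi_a(g)=g\,f(g)\,a\,f(g)^{-1}$). Then the vector fields $\xi_a$ are divergence-free for all $a\in\mathrm{Im}\,\mathbb{H}$ if and only if for every $g\in\mathbb{S}^3$ the endomorphism $M_g$ of $\mathrm{Im}\,\mathbb{H}$ defined by $M_g(x):=f_*(gx)\,f(g)^{-1}$ is symmetric with respect to the standard Euclidean scalar product on $\mathrm{Im}\,\mathbb{H}\cong\mathbb{R}^3$.
   Context: $\mathbb{S}^3$ is the unit sphere in $\mathbb{H}$ with its round metric and Lie group structure; its Lie algebra is $\mathrm{Im}\,\mathbb{H}$ and $\mathrm{T}_g\mathbb{S}^3=g\,\mathrm{Im}\,\mathbb{H}$ (quaternion products). $u(g)=(gi,gj,gk)$ is the left-invariant orthonormal frame, defining the orientation, and $\tilde u$ is a lift of $u$ to the spin principal bundle. Every spinor is written $\Psi=[\tilde u,f]$ for a function $f:\mathbb{S}^3\to\mathbb{H}$ (spinor module $\mathbb{H}$); the Clifford product of a tangent vector $gx$ ($x\in\mathrm{Im}\,\mathbb{H}$) with $[\tilde u,f]$ is $[\tilde u,xf]$ (left quaternion multiplication) and the quaternionic structure is $[\tilde u,f]a=[\tilde u,fa]$. $f_*(gx)$ denotes the derivative of $f$ in the direction of the tangent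 vector $gx$, and $f_*(gx)f(g)^{-1}$ is a quaternion product. *)

theory Defs
  imports "HOL-Analysis.Analysis"
begin

section \<open>Quaternions, modelled on real^4 (components 1,2,3,4 = real, i, j, k parts)\<close>

type_synonym quat = "real^4"

definition qmult :: "quat \<Rightarrow> quat \<Rightarrow> quat" (infixl "\<otimes>\<^sub>q" 70) where
  "p \<otimes>\<^sub>q q = vector
     [p$1*q$1 - p$2*q$2 - p$3*q$3 - p$4*q$4,
      p$1*q$2 + p$2*q$1 + p$3*q$4 - p$4*q$3,
      p$1*q$3 - p$2*q$4 + p$3*q$1 + p$4*q$2,
      p$1*q$4 + p$2*q$3 - p$3*q$2 + p$4*q$1]"

definition qcnj :: "quat \<Rightarrow> quat" where
  "qcnj p = vector [p$1, - p$2, - p$3, - p$4]"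

definition qinv :: "quat \<Rightarrow> quat" where
  "qinv p = (inverse ((norm p)\<^sup>2)) *\<^sub>R qcnj p"

definition qi :: quat where "qi = vector [0, 1, 0, 0]"
definition qj :: quat where "qj = vector [0, 0, 1, 0]"
definition qk :: quat where "qk = vector [0, 0, 0, 1]"

definition ImH :: "quat set" where
  "ImH = {x. x$1 = 0}"

abbreviation S3 :: "quat set" where
  "S3 \<equiv> sphere 0 1"

text \<open>A map is smooth on an open set if it is differentiable there and all its
  directional-derivative fields are again smooth (coinductively), i.e. it has
  derivatives of all orders.\<close>
coinductive smooth_on :: "'a::real_normed_vector set \<Rightarrow> ('a \<Rightarrow> 'b::real_normed_vector) \<Rightarrow> bool" where
  "f differentiable_on S \<Longrightarrow> (\<forall>v. smooth_on S (\<lambda>x. frechet_derivative f (at x) v))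
     \<Longrightarrow> smooth_on S f"

definition smooth_on_S3 :: "(quat \<Rightarrow> quat) \<Rightarrow> bool" where
  "smooth_on_S3 f \<longleftrightarrow> (\<exists>U. open U \<and> S3 \<subseteq> U \<and> smooth_on U f)"

definition s3_geod :: "quat \<Rightarrow> quat \<Rightarrow> real \<Rightarrow> quat" where
  "s3_geod g v t = cos t *\<^sub>R g + sin t *\<^sub>R v"

definition tan_proj :: "quat \<Rightarrow> quat \<Rightarrow> quat" where
  "tan_proj g w = w - (w \<bullet> g) *\<^sub>R g"

text \<open>Levi-Civita covariant derivative of a vector field xi on S^3 (induced metric)
  in the direction of a unit tangent vector v at g: tangential part of the ambient
  derivative of xi along a curve with initial velocity v.\<close>
definition s3_covderiv :: "(quat \<Rightarrow> quat) \<Rightarrow> quat \<Rightarrow> quat \<Rightarrow> quat" where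
  "s3_covderiv \<xi> g v = tan_proj g (vector_derivative (\<lambda>t. \<xi> (s3_geod g v t)) (at 0))"

text \<open>Divergence: trace of the covariant derivative, computed in the orthonormal
  left-invariant frame (gi, gj, gk).\<close>
definition s3_div :: "(quat \<Rightarrow> quat) \<Rightarrow> quat \<Rightarrow> real" where
  "s3_div \<xi> g = (\<Sum>x\<leftarrow>[qi, qj, qk]. s3_covderiv \<xi> g (g \<otimes>\<^sub>q x) \<bullet> (g \<otimes>\<^sub>q x))"

definition xi_field :: "(quat \<Rightarrow> quat) \<Rightarrow> quat \<Rightarrow> quat \<Rightarrow> quat" where
  "xi_field f a g = g \<otimes>\<^sub>q f g \<otimes>\<^sub>q a \<otimes>\<^sub>q qinv (f g)"

definition Mg :: "(quat \<Rightarrow> quat) \<Rightarrow> quat \<Rightarrow> quat \<Rightarrow> quat" where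
  "Mg f g x = frechet_derivative f (at g) (g \<otimes>\<^sub>q x) \<otimes>\<^sub>q qinv (f g)"

end

theory Submission
  imports Defs
begin

lemma vector4 [simp]:
 "(vector [x,y,z,w] ::('a::zero)^4)$1 = x"
 "(vector [x,y,z,w] ::('a::zero)^4)$2 = y"
 "(vector [x,y,z,w] ::('a::zero)^4)$3 = z"
 "(vector [x,y,z,w] ::('a::zero)^4)$4 = w"
  unfolding vector_def by simp_all

lemma sum_4: "sum f (UNIV::4 set) = f 1 + f 2 + f 3 + f 4"
  unfolding UNIV_4 by (simp add: ac_simps)

lemma inner4: "(x::quat) \<bullet> y = x$1*y$1 + x$2*y$2 + x$3*y$3 + x$4*y$4"
  by (simp add: inner_vec_def sum_4)

lemma qeq: "((p::quat) = q) \<longleftrightarrow> p$1 = q$1 \<and> p$2 = q$2 \<and> p$3 = q$3 \<and> p$4 = q$4"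
  by (simp add: vec_eq_iff forall_4)

lemma qmult_c [simp]:
  "(p \<otimes>\<^sub>q q)$1 = p$1*q$1 - p$2*q$2 - p$3*q$3 - p$4*q$4"
  "(p \<otimes>\<^sub>q q)$2 = p$1*q$2 + p$2*q$1 + p$3*q$4 - p$4*q$3"
  "(p \<otimes>\<^sub>q q)$3 = p$1*q$3 - p$2*q$4 + p$3*q$1 + p$4*q$2"
  "(p \<otimes>\<^sub>q q)$4 = p$1*q$4 + p$2*q$3 - p$3*q$2 + p$4*q$1"
  by (simp_all add: qmult_def)

lemma qcnj_c [simp]:
  "qcnj p $1 = p$1" "qcnj p $2 = - p$2" "qcnj p $3 = - p$3" "qcnj p $4 = - p$4"
  by (simp_all add: qcnj_def)

lemma qijk [simp]: "qi$1 = 0" "qi$2 = 1" "qi$3 = 0" "qi$4 = 0"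
  "qj$1 = 0" "qj$2 = 0" "qj$3 = 1" "qj$4 = 0"
  "qk$1 = 0" "qk$2 = 0" "qk$3 = 0" "qk$4 = 1"
  by (simp_all add: qi_def qj_def qk_def)

definition q1 :: quat where "q1 = vector [1,0,0,0]"
lemma q1c [simp]: "q1$1 = 1" "q1$2 = 0" "q1$3 = 0" "q1$4 = 0" by (simp_all add: q1_def)

lemma qassoc: "(a \<otimes>\<^sub>q b) \<otimes>\<^sub>q c = a \<otimes>\<^sub>q (b \<otimes>\<^sub>q c)"
  by (simp add: qeq algebra_simps)

lemma qinner_left: "(g \<otimes>\<^sub>q u) \<bullet> (g \<otimes>\<^sub>q w) = (g \<bullet> g) * (u \<bullet> w)"
  by (simp add: inner4 algebra_simps)

lemma qcnj_mult: "qcnj (a \<otimes>\<^sub>q b) = qcnj b \<otimes>\<^sub>q qcnj a"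
  by (simp add: qeq algebra_simps)

lemma qcnj_left: "qcnj p \<otimes>\<^sub>q p = (p \<bullet> p) *\<^sub>R q1"
  by (simp add: qeq inner4 algebra_simps power2_eq_square)
lemma qcnj_right: "p \<otimes>\<^sub>q qcnj p = (p \<bullet> p) *\<^sub>R q1"
  by (simp add: qeq inner4 algebra_simps power2_eq_square)
lemma q1_left [simp]: "q1 \<otimes>\<^sub>q a = a" by (simp add: qeq)
lemma q1_right [simp]: "a \<otimes>\<^sub>q q1 = a" by (simp add: qeq)
lemma qscale_left: "(r *\<^sub>R a) \<otimes>\<^sub>q b = r *\<^sub>R (a \<otimes>\<^sub>q b)" by (simp add: qeq algebra_simps)
lemma qscale_right: "a \<otimes>\<^sub>q (r *\<^sub>R b) = r *\<^sub>R (a \<otimes>\<^sub>q b)" by (simp add: qeq algebra_simps)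
lemma qadd_left: "(a + c) \<otimes>\<^sub>q b = a \<otimes>\<^sub>q b + c \<otimes>\<^sub>q b" by (simp add: qeq algebra_simps)
lemma qadd_right: "a \<otimes>\<^sub>q (b + c) = a \<otimes>\<^sub>q b + a \<otimes>\<^sub>q c" by (simp add: qeq algebra_simps)

lemma qmult_bilinear: "bounded_bilinear qmult"
proof -
  have "bilinear qmult"
    unfolding bilinear_def
    by (auto intro!: linearI simp: qadd_left qadd_right qscale_left qscale_right)
  thus ?thesis using bilinear_conv_bounded_bilinear by blast
qed

lemma qcnj_linear: "bounded_linear qcnj"
  by (rule linear_conv_bounded_linear[THEN iffD1], rule linearI) (simp_all add: qeq)

lemma q_real_part: "(x \<otimes>\<^sub>q A) \<bullet> x = (x \<bullet> x) * A$1"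
  by (simp add: inner4 algebra_simps)
lemma q_conj_re: "(p \<otimes>\<^sub>q a \<otimes>\<^sub>q qcnj p)$1 = (p \<bullet> p) * a$1"
  by (simp add: inner4 algebra_simps)
lemma q_M_re: "(P \<otimes>\<^sub>q qcnj p)$1 = P \<bullet> p"
  by (simp add: inner4 algebra_simps)
lemma q_g_v: "g \<bullet> (g \<otimes>\<^sub>q x) = (g \<bullet> g) * x$1"
  by (simp add: inner4 algebra_simps)
lemma qcnj_qcnj [simp]: "qcnj (qcnj p) = p" by (simp add: qeq)
lemma qneg_right: "a \<otimes>\<^sub>q (- b) = - (a \<otimes>\<^sub>q b)" by (simp add: qeq)
lemma qcnj_im: "M$1 = 0 \<Longrightarrow> qcnj M = - M"
  by (simp add: qeq)

lemma qinv_unit: "norm p = 1 \<Longrightarrow> qinv p = qcnj p"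
  by (simp add: qinv_def)

lemma pt:
  fixes f :: "quat \<Rightarrow> quat" and D g x a
  assumes hasD: "(f has_derivative D) (at g)"
    and g1: "norm g = 1" and fS3: "\<forall>h\<in>S3. f h \<in> S3"
    and x1: "x \<bullet> x = 1" and x0: "x$1 = 0" and a0: "a$1 = 0"
  shows "D (g \<otimes>\<^sub>q x) \<bullet> f g = 0"
    and "s3_covderiv (xi_field f a) g (g \<otimes>\<^sub>q x) \<bullet> (g \<otimes>\<^sub>q x)
         = ((D (g \<otimes>\<^sub>q x) \<otimes>\<^sub>q qcnj (f g)) \<otimes>\<^sub>q (f g \<otimes>\<^sub>q a \<otimes>\<^sub>q qcnj (f g))
           - (f g \<otimes>\<^sub>q a \<otimes>\<^sub>q qcnj (f g)) \<otimes>\<^sub>q (D (g \<otimes>\<^sub>q x) \<otimes>\<^sub>q qcnj (f g))) \<bullet> x"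
proof -
  define v where "v = g \<otimes>\<^sub>q x"
  define \<gamma> where "\<gamma> = s3_geod g v"
  define p where "p = f g"
  define P where "P = D v"
  have gg: "g \<bullet> g = 1" using g1 by (simp add: dot_square_norm)
  have vv: "v \<bullet> v = 1" unfolding v_def qinner_left gg x1 by simp
  have gv: "g \<bullet> v = 0" unfolding v_def q_g_v x0 by simp
  have g0: "\<gamma> 0 = g" by (simp add: \<gamma>_def s3_geod_def)
  have gn: "norm (\<gamma> t) = 1" for t
  proof -
    have "\<gamma> t \<bullet> \<gamma> t = (cos t)^2 * (g \<bullet> g) + 2 * cos t * sin t * (g \<bullet> v) + (sin t)^2 * (v \<bullet> v)"
      by (simp add: \<gamma>_def s3_geod_def inner_add_left inner_add_right inner_commute power2_eq_square algebra_simps)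
    also have "\<dots> = 1" using gg gv vv by simp
    finally show ?thesis by (simp add: norm_eq_sqrt_inner)
  qed
  have hg: "(\<gamma> has_vector_derivative v) (at 0)"
  proof -
    have "((\<lambda>t. cos t *\<^sub>R g + sin t *\<^sub>R v) has_vector_derivative (cos 0 *\<^sub>R 0 + (- sin 0) *\<^sub>R g + (sin 0 *\<^sub>R 0 + cos 0 *\<^sub>R v))) (at 0)"
      by (intro derivative_intros DERIV_cos DERIV_sin)
    thus ?thesis by (simp add: \<gamma>_def s3_geod_def[abs_def])
  qed
  have linD: "bounded_linear D" using hasD by (rule has_derivative_bounded_linear)
  have hc: "((\<lambda>t. f (\<gamma> t)) has_vector_derivative P) (at 0)"
  proof -
    have "((f \<circ> \<gamma>) has_derivative (D \<circ> (\<lambda>h. h *\<^sub>R v))) (at 0)"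
      using diff_chain_at[OF hg[unfolded has_vector_derivative_def]] hasD g0 by simp
    moreover have "D \<circ> (\<lambda>h. h *\<^sub>R v) = (\<lambda>h. h *\<^sub>R P)"
      using linear_scale[OF bounded_linear.linear[OF linD]] by (auto simp: P_def)
    ultimately show ?thesis by (simp add: has_vector_derivative_def o_def)
  qed
  have cn: "norm (f (\<gamma> t)) = 1" for t using fS3 gn by auto
  have pp: "p \<bullet> p = 1" using cn[of 0] g0 by (simp add: p_def dot_square_norm)
  have Pp: "P \<bullet> p = 0"
  proof -
    have "((\<lambda>t. f (\<gamma> t) \<bullet> f (\<gamma> t)) has_vector_derivative (f (\<gamma> 0) \<bullet> P + P \<bullet> f (\<gamma> 0))) (at 0)"
      using bounded_bilinear.has_vector_derivative[OF bounded_bilinear_inner hc hc] by simp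
    moreover have "(\<lambda>t. f (\<gamma> t) \<bullet> f (\<gamma> t)) = (\<lambda>t. 1)"
      using cn by (simp add: dot_square_norm)
    ultimately have "((\<lambda>t. 1::real) has_vector_derivative (p \<bullet> P + P \<bullet> p)) (at 0)"
      by (simp add: g0 p_def)
    hence "p \<bullet> P + P \<bullet> p = 0"
      using vector_derivative_unique_at has_vector_derivative_const by blast
    thus ?thesis by (simp add: inner_commute)
  qed
  thus "D (g \<otimes>\<^sub>q x) \<bullet> f g = 0" by (simp add: P_def v_def p_def)
  have xi: "xi_field f a (\<gamma> t) = \<gamma> t \<otimes>\<^sub>q f (\<gamma> t) \<otimes>\<^sub>q a \<otimes>\<^sub>q qcnj (f (\<gamma> t))" for t
    using cn by (simp add: xi_field_def qinv_unit)
  have hxi: "((\<lambda>t. \<gamma> t \<otimes>\<^sub>q f (\<gamma> t) \<otimes>\<^sub>q a \<otimes>\<^sub>q qcnj (f (\<gamma> t))) has_vector_derivative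
     (\<gamma> 0 \<otimes>\<^sub>q f (\<gamma> 0) \<otimes>\<^sub>q a \<otimes>\<^sub>q qcnj P + ((\<gamma> 0 \<otimes>\<^sub>q f (\<gamma> 0)) \<otimes>\<^sub>q 0 + (\<gamma> 0 \<otimes>\<^sub>q P + v \<otimes>\<^sub>q f (\<gamma> 0)) \<otimes>\<^sub>q a) \<otimes>\<^sub>q qcnj (f (\<gamma> 0)))) (at 0)"
    by (intro bounded_bilinear.has_vector_derivative[OF qmult_bilinear]
          bounded_linear.has_vector_derivative[OF qcnj_linear] hg hc has_vector_derivative_const)
  define W where "W = v \<otimes>\<^sub>q (p \<otimes>\<^sub>q a \<otimes>\<^sub>q qcnj p) + g \<otimes>\<^sub>q (P \<otimes>\<^sub>q a \<otimes>\<^sub>q qcnj p + p \<otimes>\<^sub>q a \<otimes>\<^sub>q qcnj P)"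
  have "vector_derivative (\<lambda>t. xi_field f a (s3_geod g v t)) (at 0) = W"
  proof -
    have e: "(\<lambda>t. xi_field f a (s3_geod g v t)) = (\<lambda>t. \<gamma> t \<otimes>\<^sub>q f (\<gamma> t) \<otimes>\<^sub>q a \<otimes>\<^sub>q qcnj (f (\<gamma> t)))"
      using xi by (simp add: \<gamma>_def)
    show ?thesis unfolding e
      apply (rule vector_derivative_at)
      apply (rule has_vector_derivative_eq_rhs[OF hxi])
      unfolding g0 p_def[symmetric] W_def
      by (simp add: qeq algebra_simps)
  qed
  hence cov: "s3_covderiv (xi_field f a) g v \<bullet> v = W \<bullet> v"
    by (simp add: s3_covderiv_def tan_proj_def inner_diff_left gv)
  have "W \<bullet> v = (v \<bullet> v) * (p \<otimes>\<^sub>q a \<otimes>\<^sub>q qcnj p)$1 + (g \<bullet> g) * ((P \<otimes>\<^sub>q a \<otimes>\<^sub>q qcnj p + p \<otimes>\<^sub>q a \<otimes>\<^sub>q qcnj P) \<bullet> x)"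
    unfolding W_def inner_add_left q_real_part v_def qinner_left ..
  also have "\<dots> = (P \<otimes>\<^sub>q a \<otimes>\<^sub>q qcnj p + p \<otimes>\<^sub>q a \<otimes>\<^sub>q qcnj P) \<bullet> x"
    unfolding q_conj_re a0 gg vv by simp
  also have "P \<otimes>\<^sub>q a \<otimes>\<^sub>q qcnj p + p \<otimes>\<^sub>q a \<otimes>\<^sub>q qcnj P
     = (P \<otimes>\<^sub>q qcnj p) \<otimes>\<^sub>q (p \<otimes>\<^sub>q a \<otimes>\<^sub>q qcnj p) - (p \<otimes>\<^sub>q a \<otimes>\<^sub>q qcnj p) \<otimes>\<^sub>q (P \<otimes>\<^sub>q qcnj p)"
  proof -
    have 1: "(P \<otimes>\<^sub>q qcnj p) \<otimes>\<^sub>q (p \<otimes>\<^sub>q a \<otimes>\<^sub>q qcnj p) = P \<otimes>\<^sub>q a \<otimes>\<^sub>q qcnj p"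
      by (simp add: qassoc flip: qassoc[of "qcnj p" p] add: qcnj_left pp)
    have M0: "(P \<otimes>\<^sub>q qcnj p)$1 = 0" using q_M_re Pp by simp
    have 2: "(p \<otimes>\<^sub>q a \<otimes>\<^sub>q qcnj p) \<otimes>\<^sub>q qcnj (P \<otimes>\<^sub>q qcnj p) = p \<otimes>\<^sub>q a \<otimes>\<^sub>q qcnj P"
      by (simp add: qcnj_mult qassoc flip: qassoc[of "qcnj p" p] add: qcnj_left pp)
    have 3: "(p \<otimes>\<^sub>q a \<otimes>\<^sub>q qcnj p) \<otimes>\<^sub>q (P \<otimes>\<^sub>q qcnj p) = - (p \<otimes>\<^sub>q a \<otimes>\<^sub>q qcnj P)"
      using 2 unfolding qcnj_im[OF M0] qneg_right by (metis minus_minus)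
    show ?thesis unfolding 1 3 by simp
  qed
  finally show "s3_covderiv (xi_field f a) g (g \<otimes>\<^sub>q x) \<bullet> (g \<otimes>\<^sub>q x)
         = ((D (g \<otimes>\<^sub>q x) \<otimes>\<^sub>q qcnj (f g)) \<otimes>\<^sub>q (f g \<otimes>\<^sub>q a \<otimes>\<^sub>q qcnj (f g))
           - (f g \<otimes>\<^sub>q a \<otimes>\<^sub>q qcnj (f g)) \<otimes>\<^sub>q (D (g \<otimes>\<^sub>q x) \<otimes>\<^sub>q qcnj (f g))) \<bullet> x"
    using cov by (simp add: v_def P_def p_def)
qed

lemma alg:
  assumes "Mi$1 = 0" "Mj$1 = 0" "Mk$1 = 0"
  shows "(\<forall>b::quat. b$1 = 0 \<longrightarrow> (Mi \<otimes>\<^sub>q b - b \<otimes>\<^sub>q Mi) \<bullet> qi + (Mj \<otimes>\<^sub>q b - b \<otimes>\<^sub>q Mj) \<bullet> qj + (Mk \<otimes>\<^sub>q b - b \<otimes>\<^sub>q Mk) \<bullet> qk = 0)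
     \<longleftrightarrow> (Mi$3 = Mj$2 \<and> Mi$4 = Mk$2 \<and> Mj$4 = Mk$3)"
proof
  assume H: "\<forall>b::quat. b$1 = 0 \<longrightarrow> (Mi \<otimes>\<^sub>q b - b \<otimes>\<^sub>q Mi) \<bullet> qi + (Mj \<otimes>\<^sub>q b - b \<otimes>\<^sub>q Mj) \<bullet> qj + (Mk \<otimes>\<^sub>q b - b \<otimes>\<^sub>q Mk) \<bullet> qk = 0"
  have "Mj$4 = Mk$3" using H[rule_format, of qi] assms by (simp add: inner4)
  moreover have "Mi$4 = Mk$2" using H[rule_format, of qj] assms by (simp add: inner4)
  moreover have "Mi$3 = Mj$2" using H[rule_format, of qk] assms by (simp add: inner4)
  ultimately show "Mi$3 = Mj$2 \<and> Mi$4 = Mk$2 \<and> Mj$4 = Mk$3" by simp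
next
  assume "Mi$3 = Mj$2 \<and> Mi$4 = Mk$2 \<and> Mj$4 = Mk$3"
  thus "\<forall>b::quat. b$1 = 0 \<longrightarrow> (Mi \<otimes>\<^sub>q b - b \<otimes>\<^sub>q Mi) \<bullet> qi + (Mj \<otimes>\<^sub>q b - b \<otimes>\<^sub>q Mj) \<bullet> qj + (Mk \<otimes>\<^sub>q b - b \<otimes>\<^sub>q Mk) \<bullet> qk = 0"
    using assms by (simp add: inner4 algebra_simps)
qed

lemma per_g:
  fixes f :: "quat \<Rightarrow> quat"
  assumes hasD: "(f has_derivative D) (at g)" and Ddef: "D = frechet_derivative f (at g)"
    and g1: "norm g = 1" and fS3: "\<forall>h\<in>S3. f h \<in> S3"
  shows "(\<forall>a\<in>ImH. s3_div (xi_field f a) g = 0) \<longleftrightarrow> (\<forall>x\<in>ImH. \<forall>y\<in>ImH. Mg f g x \<bullet> y = x \<bullet> Mg f g y)"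
proof -
  define p where "p = f g"
  have pn: "norm p = 1" using fS3 g1 by (simp add: p_def)
  have pp: "p \<bullet> p = 1" using pn by (simp add: dot_square_norm)
  define M where "M x = D (g \<otimes>\<^sub>q x) \<otimes>\<^sub>q qcnj p" for x
  have Mg: "Mg f g x = M x" for x using qinv_unit[OF pn[unfolded p_def]] by (simp add: Mg_def M_def Ddef p_def)
  have ii: "qi \<bullet> qi = 1" "qj \<bullet> qj = 1" "qk \<bullet> qk = 1" by (simp_all add: inner4)
  note pti = pt[OF hasD g1 fS3 ii(1), simplified, folded p_def]
  note ptj = pt[OF hasD g1 fS3 ii(2), simplified, folded p_def]
  note ptk = pt[OF hasD g1 fS3 ii(3), simplified, folded p_def]
  have M1: "M qi $1 = 0" "M qj $1 = 0" "M qk $1 = 0"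
    unfolding M_def q_M_re using pti(1)[of 0] ptj(1)[of 0] ptk(1)[of 0] by auto
  define S where "S b = (M qi \<otimes>\<^sub>q b - b \<otimes>\<^sub>q M qi) \<bullet> qi + (M qj \<otimes>\<^sub>q b - b \<otimes>\<^sub>q M qj) \<bullet> qj + (M qk \<otimes>\<^sub>q b - b \<otimes>\<^sub>q M qk) \<bullet> qk" for b
  have div: "a$1 = 0 \<Longrightarrow> s3_div (xi_field f a) g = S (p \<otimes>\<^sub>q a \<otimes>\<^sub>q qcnj p)" for a
    using pti(2)[of a] ptj(2)[of a] ptk(2)[of a] by (simp add: s3_div_def S_def M_def)
  have L: "(\<forall>a\<in>ImH. s3_div (xi_field f a) g = 0) \<longleftrightarrow> (\<forall>b::quat. b$1 = 0 \<longrightarrow> S b = 0)"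
  proof
    assume H: "\<forall>a\<in>ImH. s3_div (xi_field f a) g = 0"
    show "\<forall>b::quat. b$1 = 0 \<longrightarrow> S b = 0"
    proof (intro allI impI)
      fix b :: quat assume b0: "b$1 = 0"
      define a where "a = qcnj p \<otimes>\<^sub>q b \<otimes>\<^sub>q p"
      have a0: "a$1 = 0" using q_conj_re[of "qcnj p" b] b0 by (simp add: a_def)
      have "p \<otimes>\<^sub>q a \<otimes>\<^sub>q qcnj p = b"
        unfolding a_def by (simp add: qassoc flip: qassoc[of p "qcnj p"] add: qcnj_right pp)
      thus "S b = 0" using H div[OF a0] a0 by (auto simp: ImH_def)
    qed
  next
    assume H: "\<forall>b::quat. b$1 = 0 \<longrightarrow> S b = 0"
    show "\<forall>a\<in>ImH. s3_div (xi_field f a) g = 0"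
    proof
      fix a assume "a \<in> ImH"
      hence a0: "a$1 = 0" by (simp add: ImH_def)
      have "(p \<otimes>\<^sub>q a \<otimes>\<^sub>q qcnj p)$1 = 0" unfolding q_conj_re a0 by simp
      thus "s3_div (xi_field f a) g = 0" using H div[OF a0] by simp
    qed
  qed
  have linD: "linear D" using hasD has_derivative_linear by blast
  have Mx: "x$1 = 0 \<Longrightarrow> M x = x$2 *\<^sub>R M qi + x$3 *\<^sub>R M qj + x$4 *\<^sub>R M qk" for x
  proof -
    assume x0: "x$1 = 0"
    have "g \<otimes>\<^sub>q x = x$2 *\<^sub>R (g \<otimes>\<^sub>q qi) + x$3 *\<^sub>R (g \<otimes>\<^sub>q qj) + x$4 *\<^sub>R (g \<otimes>\<^sub>q qk)"
      using x0 by (simp add: qeq algebra_simps)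
    hence "D (g \<otimes>\<^sub>q x) = x$2 *\<^sub>R D (g \<otimes>\<^sub>q qi) + x$3 *\<^sub>R D (g \<otimes>\<^sub>q qj) + x$4 *\<^sub>R D (g \<otimes>\<^sub>q qk)"
      by (simp add: linear_add[OF linD] linear_scale[OF linD])
    thus ?thesis by (simp add: M_def qadd_left qscale_left)
  qed
  have R: "(\<forall>x\<in>ImH. \<forall>y\<in>ImH. Mg f g x \<bullet> y = x \<bullet> Mg f g y) \<longleftrightarrow> (M qi$3 = M qj$2 \<and> M qi$4 = M qk$2 \<and> M qj$4 = M qk$3)"
  proof
    assume H: "\<forall>x\<in>ImH. \<forall>y\<in>ImH. Mg f g x \<bullet> y = x \<bullet> Mg f g y"
    have I: "qi \<in> ImH" "qj \<in> ImH" "qk \<in> ImH" by (simp_all add: ImH_def)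
    show "M qi$3 = M qj$2 \<and> M qi$4 = M qk$2 \<and> M qj$4 = M qk$3"
      using H[rule_format, OF I(1) I(2)] H[rule_format, OF I(1) I(3)] H[rule_format, OF I(2) I(3)]
      by (simp add: Mg inner4)
  next
    assume C: "M qi$3 = M qj$2 \<and> M qi$4 = M qk$2 \<and> M qj$4 = M qk$3"
    show "\<forall>x\<in>ImH. \<forall>y\<in>ImH. Mg f g x \<bullet> y = x \<bullet> Mg f g y"
    proof (intro ballI)
      fix x y assume "x \<in> ImH" "y \<in> ImH"
      hence x0: "x$1 = 0" and y0: "y$1 = 0" by (auto simp: ImH_def)
      show "Mg f g x \<bullet> y = x \<bullet> Mg f g y"
        unfolding Mg Mx[OF x0] Mx[OF y0] using C x0 y0 M1 by (simp add: inner4 algebra_simps)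
    qed
  qed
  show ?thesis unfolding L R using alg[OF M1] by (simp add: S_def)
qed

theorem lemma3p1:
  fixes f :: "quat \<Rightarrow> quat"
  assumes "smooth_on_S3 f"
    and "\<forall>g\<in>S3. f g \<in> S3"
  shows "(\<forall>a\<in>ImH. \<forall>g\<in>S3. s3_div (xi_field f a) g = 0) \<longleftrightarrow>
         (\<forall>g\<in>S3. \<forall>x\<in>ImH. \<forall>y\<in>ImH. Mg f g x \<bullet> y = x \<bullet> Mg f g y)"
proof -
  obtain U where U: "open U" "S3 \<subseteq> U" "smooth_on U f"
    using assms(1) unfolding smooth_on_S3_def by blast
  have "f differentiable_on U" using U(3) by (cases rule: smooth_on.cases) auto
  hence d: "g \<in> S3 \<Longrightarrow> (f has_derivative frechet_derivative f (at g)) (at g)" for g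
    using U(1,2) differentiable_on_eq_differentiable_at frechet_derivative_works by blast
  have "\<forall>g\<in>S3. (\<forall>a\<in>ImH. s3_div (xi_field f a) g = 0) \<longleftrightarrow> (\<forall>x\<in>ImH. \<forall>y\<in>ImH. Mg f g x \<bullet> y = x \<bullet> Mg f g y)"
    using per_g[OF d refl _ assms(2)] by simp
  thus ?thesis by blast
qed

end
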